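(* Let $T\ge 1$, let $V_1,W_1,\dots,V_T,W_T$ be finite-dimensional quantum systems, $\tilde V := W_T\otimes V_T\otimes\cdots\otimes W_1\otimes V_1$, let $M\ge 1$, let $\mathcal{E}_1,\dots,\mathcal{E}_M\in\mathsf{Comb}_{W_T,V_T,\dots,W_1,V_1}$ and let $(p_1,\dots,p_M)$ be a probability vector. Let $\mathcal{P}$ be a nonempty subset of $\mathcal{P}_{\mathrm G}$. Let $\mathcal{C}$ be any closed convex cone and $\mathcal{S}$ any closed convex set such that $\mathcal{C}\subseteq \mathcal{C}_{\mathrm G}$, $\mathcal{S}\subseteq\mathcal{S}_{\mathrm G}$ and $$\overline{\mathrm{co}}\,\mathcal{P}=\Big\{\Phi\in\mathcal{C}:\ \textstyle\sum_{m=1}^M\Phi_m\in\mathcal{S}\Big\}.$$ Then $$\sup_{\Phi\in\mathcal{P}} P(\Phi)\;=\;\inf_{\chi\in\mathcal{D}_{\mathcal{C}}} D_{\mathcal{S}}(\chi),$$ i.e. the optimal values of Problem (P) and Problem (D) coincide.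
   Context: Notation: for a finite-dimensional system $X$, $\mathsf{Her}_X$, $\mathsf{Pos}_X$, $\mathsf{Den}_X$ are the Hermitian, positive semidefinite and density matrices on $X$, $I_X$ the identity, $\mathrm{Tr}_X$ the partial trace. On $\mathsf{Her}_{\tilde V}$ use $\langle A,B\rangle:=\mathrm{Tr}(AB)$. $\mathsf{Comb}_{W_T,V_T,\dots,W_1,V_1}$ is the set of $\tau\in\mathsf{Pos}_{\tilde V}$ for which there exist $\tau^{(t)}\in\mathsf{Pos}_{W_t\otimes V_t\otimes\cdots\otimes W_1\otimes V_1}$ ($1\le t\le T-1$) with $\mathrm{Tr}_{W_t}\tau^{(t)}=I_{V_t}\otimes\tau^{(t-1)}$ for all $1\le t\le T$, where $\tau^{(0)}:=1$, $\tau^{(T)}:=\tau$. $\mathsf{Comb}^*_{W_T,V_T,\dots,W_1,V_1}$ is the set of $\tau\in\mathsf{Pos}_{\tilde V}$ for which there exist $\tau^{(1)}\in\mathsf{Den}_{V_1}$ and $\tau^{(t)}\in\mathsf{Pos}_{V_t\otimes W_{t-1}\otimes V_{t-1}\otimes\cdots\otimes W_1\otimes V_1}$ ($2\le t\le T$) with $\tau=I_{W_T}\otimes\tau^{(T)}$ and $\mathrm{Tr}_{V_t}\tau^{(t)}=I_{W_{t-1}}\otimes\tau^{(t-1)}$ for $2\le t\le T$. Set $\mathcal{C}_{\mathrm G}:=\mathsf{Pos}_{\tilde V}^M$, $\mathcal{S}_{\mathrm G}:=\mathsf{Comb}^*_{W_T,V_T,\dots,W_1,V_1}$, and $\mathcal{P}_{\mathrm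 G}:=\{\Phi=(\Phi_1,\dots,\Phi_M)\in\mathcal{C}_{\mathrm G}:\sum_m\Phi_m\in\mathcal{S}_{\mathrm G}\}$ (the set of all testers). Elements $\Phi$ are viewed as vectors of the real space $\mathsf{Her}_{\tilde V}^M$; $\overline{\mathrm{co}}$ denotes the closure of the convex hull there. $P(\Phi):=\sum_{m=1}^M p_m\langle\Phi_m,\mathcal{E}_m\rangle$; Problem (P) is $\sup_{\Phi\in\mathcal{P}}P(\Phi)$. $\mathcal{D}_{\mathcal{C}}:=\{\chi\in\mathsf{Her}_{\tilde V}:\sum_{m=1}^M\langle\Phi_m,\chi-p_m\mathcal{E}_m\rangle\ge 0\ \ \forall\Phi\in\mathcal{C}\}$, $D_{\mathcal{S}}(\chi):=\max_{\varphi\in\mathcal{S}}\langle\varphi,\chi\rangle$, and Problem (D) is $\inf_{\chi\in\mathcal{D}_{\mathcal{C}}}D_{\mathcal{S}}(\chi)$. *)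

theory Defs
  imports "HOL-Analysis.Analysis" "HOL-Library.Function_Algebras"
begin

instantiation "fun" :: (type, real_vector) real_vector
begin
definition scaleR_fun :: "real \<Rightarrow> ('a \<Rightarrow> 'b) \<Rightarrow> 'a \<Rightarrow> 'b"
  where "scaleR_fun r f = (\<lambda>x. r *\<^sub>R f x)"
instance
  by standard (auto simp: scaleR_fun_def fun_eq_iff algebra_simps)
end

text \<open>Systems V_1, W_1, ..., V_T, W_T have dimensions dV t, dW t.
  A basis index of a product of some of these factors is a pair (w, v) of
  functions nat to nat: w k is the index in factor W_k and v k the index in factor
  V_k; coordinates of factors not present are fixed to 0.  An operator on such a
  product system is a matrix indexed by these indices, i.e. a function
  idx to idx to complex, required to vanish outside the index set.\<close>

type_synonym idx = "(nat \<Rightarrow> nat) \<times> (nat \<Rightarrow> nat)"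
type_synonym op = "idx \<Rightarrow> idx \<Rightarrow> complex"

text \<open>Basis index set of the tensor product of the factors W_k (k in Kw) and V_k (k in Kv).\<close>
definition IxS :: "(nat \<Rightarrow> nat) \<Rightarrow> (nat \<Rightarrow> nat) \<Rightarrow> nat set \<Rightarrow> nat set \<Rightarrow> idx set" where
  "IxS dW dV Kw Kv = {(w, v). (\<forall>k. if k \<in> Kw then w k < dW k else w k = 0) \<and>
                              (\<forall>k. if k \<in> Kv then v k < dV k else v k = 0)}"

text \<open>W_t (x) V_t (x) ... (x) W_1 (x) V_1 (for t = 0 the trivial one-dimensional system).\<close>
definition Lev :: "(nat \<Rightarrow> nat) \<Rightarrow> (nat \<Rightarrow> nat) \<Rightarrow> nat \<Rightarrow> idx set" where
  "Lev dW dV t = IxS dW dV {1..t} {1..t}"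

text \<open>V_t (x) W_(t-1) (x) V_(t-1) (x) ... (x) W_1 (x) V_1.\<close>
definition LevV :: "(nat \<Rightarrow> nat) \<Rightarrow> (nat \<Rightarrow> nat) \<Rightarrow> nat \<Rightarrow> idx set" where
  "LevV dW dV t = IxS dW dV {1..<t} {1..t}"

definition Her :: "idx set \<Rightarrow> op \<Rightarrow> bool" where
  "Her I A \<longleftrightarrow> (\<forall>i j. (i \<notin> I \<or> j \<notin> I) \<longrightarrow> A i j = 0) \<and>
               (\<forall>i\<in>I. \<forall>j\<in>I. A j i = cnj (A i j))"

definition Pos :: "idx set \<Rightarrow> op \<Rightarrow> bool" where
  "Pos I A \<longleftrightarrow> Her I A \<and>
     (\<forall>x :: idx \<Rightarrow> complex. 0 \<le> Re (\<Sum>i\<in>I. \<Sum>j\<in>I. cnj (x i) * A i j * x j))"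

definition trace :: "idx set \<Rightarrow> op \<Rightarrow> complex" where
  "trace I A = (\<Sum>i\<in>I. A i i)"

definition Den :: "idx set \<Rightarrow> op \<Rightarrow> bool" where
  "Den I A \<longleftrightarrow> Pos I A \<and> trace I A = 1"

definition inner_op :: "idx set \<Rightarrow> op \<Rightarrow> op \<Rightarrow> real" where
  "inner_op I A B = Re (\<Sum>i\<in>I. \<Sum>j\<in>I. A i j * B j i)"

definition setW :: "nat \<Rightarrow> nat \<Rightarrow> idx \<Rightarrow> idx" where
  "setW t a i = ((fst i)(t := a), snd i)"

definition setV :: "nat \<Rightarrow> nat \<Rightarrow> idx \<Rightarrow> idx" where
  "setV t a i = (fst i, (snd i)(t := a))"

text \<open>I_(W_t) (x) B, as an operator on the bigger index set I.\<close>
definition tensIW :: "idx set \<Rightarrow> nat \<Rightarrow> op \<Rightarrow> op" where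
  "tensIW I t B = (\<lambda>i j. if i \<in> I \<and> j \<in> I \<and> fst i t = fst j t
                          then B (setW t 0 i) (setW t 0 j) else 0)"

text \<open>I_(V_t) (x) B, as an operator on the bigger index set I.\<close>
definition tensIV :: "idx set \<Rightarrow> nat \<Rightarrow> op \<Rightarrow> op" where
  "tensIV I t B = (\<lambda>i j. if i \<in> I \<and> j \<in> I \<and> snd i t = snd j t
                          then B (setV t 0 i) (setV t 0 j) else 0)"

definition ptrW :: "(nat \<Rightarrow> nat) \<Rightarrow> idx set \<Rightarrow> nat \<Rightarrow> op \<Rightarrow> op" where
  "ptrW dW I t A = (\<lambda>i j. if i \<in> I \<and> j \<in> I
                        then (\<Sum>a<dW t. A (setW t a i) (setW t a j)) else 0)"

definition ptrV :: "(nat \<Rightarrow> nat) \<Rightarrow> idx set \<Rightarrow> nat \<Rightarrow> op \<Rightarrow> op" where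
  "ptrV dV I t A = (\<lambda>i j. if i \<in> I \<and> j \<in> I
                        then (\<Sum>a<dV t. A (setV t a i) (setV t a j)) else 0)"

text \<open>The number 1 as an operator on the trivial system (level 0).\<close>
definition one_op :: "idx set \<Rightarrow> op" where
  "one_op I = (\<lambda>i j. if i \<in> I \<and> j \<in> I then 1 else 0)"

definition Comb :: "nat \<Rightarrow> (nat \<Rightarrow> nat) \<Rightarrow> (nat \<Rightarrow> nat) \<Rightarrow> op set" where
  "Comb T dW dV = {\<tau>. Pos (Lev dW dV T) \<tau> \<and>
     (\<exists>\<tau>s :: nat \<Rightarrow> op.
        \<tau>s 0 = one_op (Lev dW dV 0) \<and> \<tau>s T = \<tau> \<and>
        (\<forall>t. 1 \<le> t \<and> t \<le> T - 1 \<longrightarrow> Pos (Lev dW dV t) (\<tau>s t)) \<and>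
        (\<forall>t. 1 \<le> t \<and> t \<le> T \<longrightarrow>
           ptrW dW (LevV dW dV t) t (\<tau>s t) = tensIV (LevV dW dV t) t (\<tau>s (t - 1))))}"

definition CombDual :: "nat \<Rightarrow> (nat \<Rightarrow> nat) \<Rightarrow> (nat \<Rightarrow> nat) \<Rightarrow> op set" where
  "CombDual T dW dV = {\<tau>. Pos (Lev dW dV T) \<tau> \<and>
     (\<exists>\<tau>s :: nat \<Rightarrow> op.
        Den (LevV dW dV 1) (\<tau>s 1) \<and>
        (\<forall>t. 2 \<le> t \<and> t \<le> T \<longrightarrow> Pos (LevV dW dV t) (\<tau>s t)) \<and>
        \<tau> = tensIW (Lev dW dV T) T (\<tau>s T) \<and>
        (\<forall>t. 2 \<le> t \<and> t \<le> T \<longrightarrow>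
           ptrV dV (Lev dW dV (t - 1)) t (\<tau>s t) =
           tensIW (Lev dW dV (t - 1)) (t - 1) (\<tau>s (t - 1))))}"

text \<open>M-tuples (Phi_1, ..., Phi_M) are represented as functions nat to op, with
  Phi m = 0 for m outside 1..M, so that they form the real vector space Her^M.\<close>

definition HerM :: "nat \<Rightarrow> idx set \<Rightarrow> (nat \<Rightarrow> op) set" where
  "HerM M I = {\<Phi>. (\<forall>m\<in>{1..M}. Her I (\<Phi> m)) \<and> (\<forall>m. m \<notin> {1..M} \<longrightarrow> \<Phi> m = 0)}"

definition CG :: "nat \<Rightarrow> nat \<Rightarrow> (nat \<Rightarrow> nat) \<Rightarrow> (nat \<Rightarrow> nat) \<Rightarrow> (nat \<Rightarrow> op) set" where
  "CG M T dW dV = {\<Phi>. (\<forall>m\<in>{1..M}. Pos (Lev dW dV T) (\<Phi> m)) \<and> (\<forall>m. m \<notin> {1..M} \<longrightarrow> \<Phi> m = 0)}"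

definition SG :: "nat \<Rightarrow> (nat \<Rightarrow> nat) \<Rightarrow> (nat \<Rightarrow> nat) \<Rightarrow> op set" where
  "SG T dW dV = CombDual T dW dV"

definition PG :: "nat \<Rightarrow> nat \<Rightarrow> (nat \<Rightarrow> nat) \<Rightarrow> (nat \<Rightarrow> nat) \<Rightarrow> (nat \<Rightarrow> op) set" where
  "PG M T dW dV = {\<Phi> \<in> CG M T dW dV. (\<Sum>m=1..M. \<Phi> m) \<in> SG T dW dV}"

definition Pobj :: "nat \<Rightarrow> idx set \<Rightarrow> (nat \<Rightarrow> real) \<Rightarrow> (nat \<Rightarrow> op) \<Rightarrow> (nat \<Rightarrow> op) \<Rightarrow> real" where
  "Pobj M I p E \<Phi> = (\<Sum>m=1..M. p m * inner_op I (\<Phi> m) (E m))"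

definition DC :: "nat \<Rightarrow> idx set \<Rightarrow> (nat \<Rightarrow> real) \<Rightarrow> (nat \<Rightarrow> op) \<Rightarrow> (nat \<Rightarrow> op) set \<Rightarrow> op set" where
  "DC M I p E C = {X. Her I X \<and>
     (\<forall>\<Phi>\<in>C. 0 \<le> (\<Sum>m=1..M. inner_op I (\<Phi> m) (X - p m *\<^sub>R E m)))}"

text \<open>D_S(chi) = max over S of <phi, chi> (written as a supremum; it is attained
  when S is nonempty and compact).\<close>
definition DS :: "idx set \<Rightarrow> op set \<Rightarrow> op \<Rightarrow> real" where
  "DS I S X = Sup ((\<lambda>\<phi>. inner_op I \<phi> X) ` S)"

end

theory Submission
  imports Defs
begin


lemma sum_fun_app: "(sum f A) x = sum (\<lambda>a. f a x) A"
  by (induction A rule: infinite_finite_induct) auto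

lemma finite_IxS:
  assumes "finite Kw" "finite Kv"
  shows "finite (IxS dW dV Kw Kv)"
proof -
  have fin: "finite {w :: nat \<Rightarrow> nat. \<forall>k. if k \<in> K then w k < d k else w k = 0}"
    if "finite K" for K d
  proof -
    have "{w :: nat \<Rightarrow> nat. \<forall>k. if k \<in> K then w k < d k else w k = 0}
        \<subseteq> (\<lambda>f k. if k \<in> K then f k else 0) ` (PiE K (\<lambda>k. {..<d k}))"
    proof
      fix w :: "nat \<Rightarrow> nat" assume w: "w \<in> {w. \<forall>k. if k \<in> K then w k < d k else w k = 0}"
      have "w = (\<lambda>k. if k \<in> K then restrict w K k else 0)"
        using w by (auto simp: fun_eq_iff)
      moreover have "restrict w K \<in> PiE K (\<lambda>k. {..<d k})"
        using w by auto
      ultimately show "w \<in> (\<lambda>f k. if k \<in> K then f k else 0) ` (PiE K (\<lambda>k. {..<d k}))"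
        by blast
    qed
    moreover have "finite (PiE K (\<lambda>k. {..<d k}))" using that by (simp add: finite_PiE)
    ultimately show ?thesis by (meson finite_imageI finite_subset)
  qed
  have "IxS dW dV Kw Kv = {w. \<forall>k. if k \<in> Kw then w k < dW k else w k = 0} \<times>
      {v. \<forall>k. if k \<in> Kv then v k < dV k else v k = 0}"
    by (auto simp: IxS_def)
  then show ?thesis using fin assms by simp
qed

lemma finite_Lev: "finite (Lev dW dV t)" unfolding Lev_def by (rule finite_IxS) auto
lemma finite_LevV: "finite (LevV dW dV t)" unfolding LevV_def by (rule finite_IxS) auto



lemma Pos_Her: "Pos I A \<Longrightarrow> Her I A" by (simp add: Pos_def)

lemma Her_out: "Her I A \<Longrightarrow> i \<notin> I \<or> j \<notin> I \<Longrightarrow> A i j = 0"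
  unfolding Her_def by blast

lemma Her_sym: "Her I A \<Longrightarrow> i \<in> I \<Longrightarrow> j \<in> I \<Longrightarrow> A j i = cnj (A i j)"
  unfolding Her_def by blast

lemma Pos_quad: "Pos I A \<Longrightarrow> 0 \<le> Re (\<Sum>i\<in>I. \<Sum>j\<in>I. cnj (x i) * A i j * x j)"
  by (simp add: Pos_def)

lemma double_sum_supp:
  fixes g :: "idx \<Rightarrow> idx \<Rightarrow> complex"
  assumes "finite I" "K \<subseteq> I" "\<And>i j. i \<notin> K \<or> j \<notin> K \<Longrightarrow> g i j = 0"
  shows "(\<Sum>i\<in>I. \<Sum>j\<in>I. g i j) = (\<Sum>i\<in>K. \<Sum>j\<in>K. g i j)"
proof -
  have "(\<Sum>i\<in>I. \<Sum>j\<in>I. g i j) = (\<Sum>i\<in>K. \<Sum>j\<in>I. g i j)"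
    by (rule sum.mono_neutral_right) (use assms in auto)
  also have "\<dots> = (\<Sum>i\<in>K. \<Sum>j\<in>K. g i j)"
    by (rule sum.cong[OF refl], rule sum.mono_neutral_right) (use assms in auto)
  finally show ?thesis .
qed

lemma cnj_norm_e1: fixes a :: complex assumes "a \<noteq> 0" shows "a * (- cnj a / cmod a) = - cmod a"
proof -
  have "a * cnj a = of_real (cmod a ^ 2)" using complex_norm_square[of a] by simp
  then have "a * (- cnj a / cmod a) = - of_real (cmod a ^ 2) / of_real (cmod a)" by (simp add: field_simps)
  also have "\<dots> = - cmod a" using assms by (simp add: power2_eq_square)
  finally show ?thesis .
qed
lemma cnj_norm_cc: fixes a :: complex assumes "a \<noteq> 0" shows "cnj (- cnj a / cmod a) * (- cnj a / cmod a) = 1"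
proof -
  have "a * cnj a = of_real (cmod a ^ 2)" using complex_norm_square[of a] by simp
  then show ?thesis using assms by (simp add: field_simps power2_eq_square)
qed

lemma Pos_diag:
  assumes "Pos I A" "finite I" "i \<in> I"
  shows "Im (A i i) = 0" "0 \<le> Re (A i i)"
proof -
  have "A i i = cnj (A i i)" using Her_sym[OF Pos_Her[OF assms(1)] assms(3) assms(3)] .
  then show "Im (A i i) = 0" by (metis cnj.simps(2) neg_equal_zero)
  let ?x = "\<lambda>k. if k = i then (1::complex) else 0"
  have "(\<Sum>k\<in>I. \<Sum>l\<in>I. cnj (?x k) * A k l * ?x l) = (\<Sum>k\<in>{i}. \<Sum>l\<in>{i}. cnj (?x k) * A k l * ?x l)"
    by (rule double_sum_supp) (use assms in auto)
  then show "0 \<le> Re (A i i)" using Pos_quad[OF assms(1), of ?x] by simp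
qed

lemma Pos_offdiag:
  assumes "Pos I A" "finite I" "i \<in> I" "j \<in> I"
  shows "cmod (A i j) \<le> (Re (A i i) + Re (A j j)) / 2"
proof (cases "i = j")
  case True
  then show ?thesis using Pos_diag[OF assms(1-3)] by (simp add: cmod_eq_Re)
next
  case False
  show ?thesis
  proof (cases "A i j = 0")
    case True then show ?thesis using Pos_diag[OF assms(1,2)] assms by simp
  next
    case nz: False
    define c where "c = - cnj (A i j) / cmod (A i j)"
    let ?x = "\<lambda>k. if k = i then (1::complex) else if k = j then c else 0"
    have hij: "A j i = cnj (A i j)" using Her_sym[OF Pos_Her[OF assms(1)] assms(3) assms(4)] .
    have "(\<Sum>k\<in>I. \<Sum>l\<in>I. cnj (?x k) * A k l * ?x l) = (\<Sum>k\<in>{i,j}. \<Sum>l\<in>{i,j}. cnj (?x k) * A k l * ?x l)"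
      by (rule double_sum_supp) (use assms in auto)
    also have "\<dots> = A i i + A i j * c + cnj c * A j i + cnj c * A j j * c"
      using False by (simp add: algebra_simps)
    finally have eq: "(\<Sum>k\<in>I. \<Sum>l\<in>I. cnj (?x k) * A k l * ?x l) = A i i + A i j * c + cnj c * A j i + cnj c * A j j * c" .
    have cm: "cmod (A i j) > 0" using nz by simp
    have e1: "A i j * c = - cmod (A i j)"
      unfolding c_def by (rule cnj_norm_e1[OF nz])
    have e2: "cnj c * A j i = - cmod (A i j)"
      using e1 hij by (metis complex_cnj_cnj complex_cnj_mult complex_cnj_complex_of_real complex_cnj_minus mult.commute)
    have cc: "cnj c * c = 1"
      unfolding c_def by (rule cnj_norm_cc[OF nz])
    have e3: "cnj c * A j j * c = A j j"
      using cc by (metis mult.commute mult.left_commute mult_1)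
    have "0 \<le> Re (A i i) - 2 * cmod (A i j) + Re (A j j)"
      using Pos_quad[OF assms(1), of ?x] unfolding eq e1 e2 e3 by simp
    then show ?thesis by simp
  qed
qed

lemma trace_Re_nonneg:
  assumes "Pos I A" "finite I"
  shows "Re (trace I A) = (\<Sum>i\<in>I. Re (A i i))" "0 \<le> Re (trace I A)"
  using Pos_diag[OF assms] assms(2) by (auto simp: trace_def Re_sum intro: sum_nonneg)

lemma Pos_entry_le_trace:
  assumes "Pos I A" "finite I"
  shows "cmod (A i j) \<le> Re (trace I A)"
proof (cases "i \<in> I \<and> j \<in> I")
  case True
  have di: "Re (A i i) \<le> Re (trace I A)" and dj: "Re (A j j) \<le> Re (trace I A)"
    using True trace_Re_nonneg[OF assms] Pos_diag[OF assms] assms(2)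
    by (auto intro!: member_le_sum)
  show ?thesis using Pos_offdiag[OF assms, of i j] True di dj by simp
next
  case False
  then have "A i j = 0" using Her_out[OF Pos_Her[OF assms(1)]] by blast
  then show ?thesis using trace_Re_nonneg(2)[OF assms] by (simp only: norm_zero)
qed




lemma mem_IxS: "x \<in> IxS dW dV Kw Kv \<longleftrightarrow>
   (\<forall>k. if k \<in> Kw then fst x k < dW k else fst x k = 0) \<and>
   (\<forall>k. if k \<in> Kv then snd x k < dV k else snd x k = 0)"
  by (cases x) (simp add: IxS_def)

lemma reindex_V:
  assumes "t \<ge> 1"
  shows "sum f (LevV dW dV t) = (\<Sum>i\<in>Lev dW dV (t-1). \<Sum>a<dV t. f (setV t a i))"
proof -
  let ?h = "\<lambda>(i, a). setV t a i"
  let ?A = "Lev dW dV (t-1) \<times> {..<dV t}"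
  have t0: "snd i t = 0" if "i \<in> Lev dW dV (t-1)" for i
  proof -
    have "if t \<in> {1..t-1} then snd i t < dV t else snd i t = 0"
      using that unfolding Lev_def mem_IxS by blast
    moreover have "t \<notin> {1..t-1}" using assms by auto
    ultimately show ?thesis by simp
  qed
  have inj: "inj_on ?h ?A"
  proof (rule inj_onI)
    fix x y assume x: "x \<in> ?A" and y: "y \<in> ?A" and h: "?h x = ?h y"
    obtain i a where xe: "x = (i, a)" by (cases x)
    obtain i' a' where ye: "y = (i', a')" by (cases y)
    have i: "i \<in> Lev dW dV (t-1)" and i': "i' \<in> Lev dW dV (t-1)" and eq: "setV t a i = setV t a' i'"
      using x y h xe ye by auto
    have f: "fst i = fst i'" and s: "(snd i)(t := a) = (snd i')(t := a')"
      using eq by (auto simp: setV_def)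
    have "a = a'" using fun_cong[OF s, of t] by simp
    moreover have "snd i = snd i'"
    proof
      fix k show "snd i k = snd i' k"
        using fun_cong[OF s, of k] t0[OF i] t0[OF i'] by (cases "k = t") auto
    qed
    ultimately show "x = y" using f xe ye by (simp add: prod_eq_iff)
  qed
  have img: "?h ` ?A = LevV dW dV t"
  proof
    show "?h ` ?A \<subseteq> LevV dW dV t"
    proof
      fix y assume "y \<in> ?h ` ?A"
      then obtain i a where i: "i \<in> Lev dW dV (t-1)" and a: "a < dV t" and ye: "y = setV t a i" by auto
      have "setV t a i \<in> LevV dW dV t"
        unfolding LevV_def mem_IxS setV_def
      proof (intro conjI allI)
        fix k
        have "(if k \<in> {1..t-1} then fst i k < dW k else fst i k = 0)"
          using i unfolding Lev_def mem_IxS by blast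
        moreover have "{1..t-1} = {1..<t}" using assms by auto
        ultimately show "if k \<in> {1..<t} then fst (fst i, (snd i)(t := a)) k < dW k else fst (fst i, (snd i)(t := a)) k = 0"
          using assms by (cases "k < t") (auto split: if_splits)
      next
        fix k
        have "(if k \<in> {1..t-1} then snd i k < dV k else snd i k = 0)"
          using i unfolding Lev_def mem_IxS by blast
        then show "if k \<in> {1..t} then snd (fst i, (snd i)(t := a)) k < dV k else snd (fst i, (snd i)(t := a)) k = 0"
          using a assms by (cases "k = t") (auto split: if_splits)
      qed
      then show "y \<in> LevV dW dV t" using ye by simp
    qed
  next
    show "LevV dW dV t \<subseteq> ?h ` ?A"
    proof
      fix y assume y: "y \<in> LevV dW dV t"
      have "setV t 0 y \<in> Lev dW dV (t-1)"
        unfolding Lev_def mem_IxS setV_def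
      proof (intro conjI allI)
        fix k
        have "(if k \<in> {1..<t} then fst y k < dW k else fst y k = 0)"
          using y unfolding LevV_def mem_IxS by blast
        moreover have "{1..t-1} = {1..<t}" using assms by auto
        ultimately show "if k \<in> {1..t-1} then fst (fst y, (snd y)(t := 0)) k < dW k else fst (fst y, (snd y)(t := 0)) k = 0"
          using assms by (cases "k < t") (auto split: if_splits)
      next
        fix k
        have "(if k \<in> {1..t} then snd y k < dV k else snd y k = 0)"
          using y unfolding LevV_def mem_IxS by blast
        then show "if k \<in> {1..t-1} then snd (fst y, (snd y)(t := 0)) k < dV k else snd (fst y, (snd y)(t := 0)) k = 0"
          using assms by (cases "k = t") (auto split: if_splits)
      qed
      moreover have "snd y t < dV t"
        using y assms unfolding LevV_def mem_IxS by (metis atLeastAtMost_iff order_refl)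
      moreover have "y = setV t (snd y t) (setV t 0 y)"
        by (simp add: setV_def)
      ultimately show "y \<in> ?h ` ?A" by force
    qed
  qed
  have "(\<Sum>i\<in>Lev dW dV (t-1). \<Sum>a<dV t. f (setV t a i)) = (\<Sum>x\<in>?A. f (?h x))"
    by (simp add: sum.cartesian_product split_def)
  also have "\<dots> = sum f (?h ` ?A)"
    using sum.reindex[OF inj, of f] by (simp add: comp_def)
  finally show ?thesis using img by simp
qed

lemma reindex_W:
  assumes "t \<ge> 1"
  shows "sum f (Lev dW dV t) = (\<Sum>i\<in>LevV dW dV t. \<Sum>a<dW t. f (setW t a i))"
proof -
  let ?h = "\<lambda>(i, a). setW t a i"
  let ?A = "LevV dW dV t \<times> {..<dW t}"
  have t0: "fst i t = 0" if "i \<in> LevV dW dV t" for i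
  proof -
    have "if t \<in> {1..<t} then fst i t < dW t else fst i t = 0"
      using that unfolding LevV_def mem_IxS by blast
    moreover have "t \<notin> {1..<t}" by auto
    ultimately show ?thesis by simp
  qed
  have inj: "inj_on ?h ?A"
  proof (rule inj_onI)
    fix x y assume x: "x \<in> ?A" and y: "y \<in> ?A" and h: "?h x = ?h y"
    obtain i a where xe: "x = (i, a)" by (cases x)
    obtain i' a' where ye: "y = (i', a')" by (cases y)
    have i: "i \<in> LevV dW dV t" and i': "i' \<in> LevV dW dV t" and eq: "setW t a i = setW t a' i'"
      using x y h xe ye by auto
    have f: "snd i = snd i'" and s: "(fst i)(t := a) = (fst i')(t := a')"
      using eq by (auto simp: setW_def)
    have "a = a'" using fun_cong[OF s, of t] by simp
    moreover have "fst i = fst i'"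
    proof
      fix k show "fst i k = fst i' k"
        using fun_cong[OF s, of k] t0[OF i] t0[OF i'] by (cases "k = t") auto
    qed
    ultimately show "x = y" using f xe ye by (simp add: prod_eq_iff)
  qed
  have img: "?h ` ?A = Lev dW dV t"
  proof
    show "?h ` ?A \<subseteq> Lev dW dV t"
    proof
      fix y assume "y \<in> ?h ` ?A"
      then obtain i a where i: "i \<in> LevV dW dV t" and a: "a < dW t" and ye: "y = setW t a i" by auto
      have "setW t a i \<in> Lev dW dV t"
        unfolding Lev_def mem_IxS setW_def
      proof (intro conjI allI)
        fix k
        have "(if k \<in> {1..<t} then fst i k < dW k else fst i k = 0)"
          using i unfolding LevV_def mem_IxS by blast
        then show "if k \<in> {1..t} then fst ((fst i)(t := a), snd i) k < dW k else fst ((fst i)(t := a), snd i) k = 0"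
          using a assms by (cases "k = t") (auto split: if_splits)
      next
        fix k
        show "if k \<in> {1..t} then snd ((fst i)(t := a), snd i) k < dV k else snd ((fst i)(t := a), snd i) k = 0"
          using i unfolding LevV_def mem_IxS by simp
      qed
      then show "y \<in> Lev dW dV t" using ye by simp
    qed
  next
    show "Lev dW dV t \<subseteq> ?h ` ?A"
    proof
      fix y assume y: "y \<in> Lev dW dV t"
      have "setW t 0 y \<in> LevV dW dV t"
        unfolding LevV_def mem_IxS setW_def
      proof (intro conjI allI)
        fix k
        have "(if k \<in> {1..t} then fst y k < dW k else fst y k = 0)"
          using y unfolding Lev_def mem_IxS by blast
        then show "if k \<in> {1..<t} then fst ((fst y)(t := 0), snd y) k < dW k else fst ((fst y)(t := 0), snd y) k = 0"
          using assms by (cases "k = t") (auto split: if_splits)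
      next
        fix k
        show "if k \<in> {1..t} then snd ((fst y)(t := 0), snd y) k < dV k else snd ((fst y)(t := 0), snd y) k = 0"
          using y unfolding Lev_def mem_IxS by simp
      qed
      moreover have "fst y t < dW t"
        using y assms unfolding Lev_def mem_IxS by (metis atLeastAtMost_iff order_refl)
      moreover have "y = setW t (fst y t) (setW t 0 y)"
        by (simp add: setW_def)
      ultimately show "y \<in> ?h ` ?A" by force
    qed
  qed
  have "(\<Sum>i\<in>LevV dW dV t. \<Sum>a<dW t. f (setW t a i)) = (\<Sum>x\<in>?A. f (?h x))"
    by (simp add: sum.cartesian_product split_def)
  also have "\<dots> = sum f (?h ` ?A)"
    using sum.reindex[OF inj, of f] by (simp add: comp_def)
  finally show ?thesis using img by simp
qed

lemma trace_tensIW: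
  assumes "t \<ge> 1"
  shows "trace (Lev dW dV t) (tensIW (Lev dW dV t) t \<sigma>) = of_nat (dW t) * trace (LevV dW dV t) \<sigma>"
proof -
  have t0: "setW t 0 i = i" if "i \<in> LevV dW dV t" for i
  proof -
    have "if t \<in> {1..<t} then fst i t < dW t else fst i t = 0"
      using that unfolding LevV_def mem_IxS by blast
    then have "fst i t = 0" by simp
    then show ?thesis by (simp add: setW_def prod_eq_iff fun_eq_iff)
  qed
  have "trace (Lev dW dV t) (tensIW (Lev dW dV t) t \<sigma>) = (\<Sum>i\<in>Lev dW dV t. \<sigma> (setW t 0 i) (setW t 0 i))"
    unfolding trace_def tensIW_def by simp
  also have "\<dots> = (\<Sum>i\<in>LevV dW dV t. \<Sum>a<dW t. \<sigma> (setW t 0 (setW t a i)) (setW t 0 (setW t a i)))"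
    by (rule reindex_W[OF assms])
  also have "\<dots> = (\<Sum>i\<in>LevV dW dV t. \<Sum>a<dW t. \<sigma> i i)"
    by (rule sum.cong[OF refl], rule sum.cong[OF refl]) (simp add: setW_def t0[unfolded setW_def])
  also have "\<dots> = of_nat (dW t) * trace (LevV dW dV t) \<sigma>"
    by (simp add: trace_def sum_distrib_left)
  finally show ?thesis .
qed

lemma trace_ptrV:
  assumes "t \<ge> 1"
  shows "trace (Lev dW dV (t-1)) (ptrV dV (Lev dW dV (t-1)) t \<sigma>) = trace (LevV dW dV t) \<sigma>"
  unfolding trace_def ptrV_def using reindex_V[OF assms, of "\<lambda>i. \<sigma> i i"] by simp

lemma trace_CombDual:
  assumes "\<tau> \<in> CombDual T dW dV" "T \<ge> 1"
  shows "trace (Lev dW dV T) \<tau> = of_nat (\<Prod>s\<in>{1..T}. dW s)"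
proof -
  obtain \<tau>s where d1: "Den (LevV dW dV 1) (\<tau>s 1)"
    and tT: "\<tau> = tensIW (Lev dW dV T) T (\<tau>s T)"
    and rec: "\<And>t. 2 \<le> t \<Longrightarrow> t \<le> T \<Longrightarrow>
           ptrV dV (Lev dW dV (t - 1)) t (\<tau>s t) = tensIW (Lev dW dV (t - 1)) (t - 1) (\<tau>s (t - 1))"
    using assms(1) unfolding CombDual_def by blast
  have step: "Suc t \<le> T \<Longrightarrow> trace (LevV dW dV (Suc t)) (\<tau>s (Suc t)) = of_nat (\<Prod>s\<in>{1..t}. dW s)" for t
  proof (induction t)
    case 0
    then show ?case using d1 by (simp add: Den_def)
  next
    case (Suc t)
    have "trace (LevV dW dV (Suc (Suc t))) (\<tau>s (Suc (Suc t)))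
        = trace (Lev dW dV (Suc t)) (ptrV dV (Lev dW dV (Suc t)) (Suc (Suc t)) (\<tau>s (Suc (Suc t))))"
      using trace_ptrV[of "Suc (Suc t)" dW dV] by simp
    also have "\<dots> = trace (Lev dW dV (Suc t)) (tensIW (Lev dW dV (Suc t)) (Suc t) (\<tau>s (Suc t)))"
      using rec[of "Suc (Suc t)"] Suc.prems by simp
    also have "\<dots> = of_nat (dW (Suc t)) * trace (LevV dW dV (Suc t)) (\<tau>s (Suc t))"
      by (rule trace_tensIW) simp
    also have "\<dots> = of_nat (dW (Suc t)) * of_nat (\<Prod>s\<in>{1..t}. dW s)"
      using Suc by simp
    also have "\<dots> = of_nat (\<Prod>s\<in>{1..Suc t}. dW s)"
      by (simp add: prod.nat_ivl_Suc' mult.commute)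
    finally show ?case .
  qed
  obtain T' where T': "T = Suc T'" using assms(2) by (cases T) auto
  have "trace (Lev dW dV T) \<tau> = of_nat (dW T) * trace (LevV dW dV T) (\<tau>s T)"
    using tT trace_tensIW[of T dW dV] assms(2) by simp
  also have "\<dots> = of_nat (dW T) * of_nat (\<Prod>s\<in>{1..T'}. dW s)"
    using step[of T'] T' by simp
  also have "\<dots> = of_nat (\<Prod>s\<in>{1..T}. dW s)"
    using T' by (simp add: prod.nat_ivl_Suc' mult.commute)
  finally show ?thesis .
qed



lemma inner_op_add1: "inner_op I (A + B) X = inner_op I A X + inner_op I B X"
  by (simp add: inner_op_def distrib_right sum.distrib)

lemma inner_op_diff1: "inner_op I (A - B) X = inner_op I A X - inner_op I B X"
  by (simp add: inner_op_def left_diff_distrib sum_subtractf)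

lemma inner_op_scaleR1: "inner_op I (c *\<^sub>R A) X = c * inner_op I A X"
  by (simp add: inner_op_def scaleR_fun_def scaleR_conv_of_real sum_distrib_left mult.assoc)

lemma inner_op_zero1: "inner_op I 0 X = 0"
  by (simp add: inner_op_def)

lemma inner_op_sum1: "inner_op I (\<Sum>m\<in>K. F m) X = (\<Sum>m\<in>K. inner_op I (F m) X)"
proof (induction K rule: infinite_finite_induct)
  case (infinite K) then show ?case by (simp add: inner_op_def)
next
  case empty then show ?case by (simp only: sum.empty inner_op_zero1)
next
  case (insert x K) then show ?case by (simp only: sum.insert[OF insert(1,2)] inner_op_add1 insert(3))
qed

lemma inner_op_diff2: "inner_op I A (X - c *\<^sub>R E) = inner_op I A X - c * inner_op I A E"
  by (simp add: inner_op_def scaleR_fun_def scaleR_conv_of_real right_diff_distrib sum_subtractf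
      sum_distrib_left algebra_simps)

lemma HerI: "(\<And>i j. i \<notin> I \<or> j \<notin> I \<Longrightarrow> A i j = 0) \<Longrightarrow>
   (\<And>i j. i \<in> I \<Longrightarrow> j \<in> I \<Longrightarrow> A j i = cnj (A i j)) \<Longrightarrow> Her I A"
  unfolding Her_def by blast

lemma Her_diff: assumes "Her I A" "Her I B" shows "Her I (A - B)"
proof (rule HerI)
  fix i j assume h: "i \<notin> I \<or> j \<notin> I"
  have "A i j = 0" "B i j = 0" using Her_out[OF assms(1) h] Her_out[OF assms(2) h] .
  then show "(A - B) i j = 0" by simp
next
  fix i j assume "i \<in> I" "j \<in> I"
  then have "A j i = cnj (A i j)" "B j i = cnj (B i j)" using Her_sym assms by blast+
  then show "(A - B) j i = cnj ((A - B) i j)" by simp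
qed

lemma Her_add: assumes "Her I A" "Her I B" shows "Her I (A + B)"
proof (rule HerI)
  fix i j assume h: "i \<notin> I \<or> j \<notin> I"
  have "A i j = 0" "B i j = 0" using Her_out[OF assms(1) h] Her_out[OF assms(2) h] .
  then show "(A + B) i j = 0" by simp
next
  fix i j assume "i \<in> I" "j \<in> I"
  then have "A j i = cnj (A i j)" "B j i = cnj (B i j)" using Her_sym assms by blast+
  then show "(A + B) j i = cnj ((A + B) i j)" by simp
qed

lemma Her_scaleR: assumes "Her I A" shows "Her I (c *\<^sub>R A)"
proof (rule HerI)
  fix i j assume h: "i \<notin> I \<or> j \<notin> I"
  have "A i j = 0" using Her_out[OF assms(1) h] .
  then show "(c *\<^sub>R A) i j = 0" by (simp add: scaleR_fun_def)
next
  fix i j assume "i \<in> I" "j \<in> I"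
  then have "A j i = cnj (A i j)" using Her_sym assms by blast
  then show "(c *\<^sub>R A) j i = cnj ((c *\<^sub>R A) i j)" by (simp add: scaleR_fun_def scaleR_conv_of_real)
qed

lemma Her_zero: "Her I 0"
  by (rule HerI) simp_all

lemma Her_sum: "(\<And>m. m \<in> K \<Longrightarrow> Her I (F m)) \<Longrightarrow> Her I (\<Sum>m\<in>K. F m)"
proof (induction K rule: infinite_finite_induct)
  case (infinite K) then show ?case by (metis Her_zero sum.infinite)
next
  case empty then show ?case by (simp only: sum.empty Her_zero)
next
  case (insert x K) then show ?case by (simp only: sum.insert[OF insert(1,2)]) (rule Her_add; simp)
qed

lemma inner_op_Her2:
  assumes "Her I Y0"
  shows "inner_op I Y Y0 = (\<Sum>i\<in>I. \<Sum>j\<in>I. Re (Y i j * cnj (Y0 i j)))"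
proof -
  have "inner_op I Y Y0 = (\<Sum>i\<in>I. \<Sum>j\<in>I. Re (Y i j * Y0 j i))"
    unfolding inner_op_def by (simp only: Re_sum)
  also have "\<dots> = (\<Sum>i\<in>I. \<Sum>j\<in>I. Re (Y i j * cnj (Y0 i j)))"
  proof (rule sum.cong[OF refl], rule sum.cong[OF refl])
    fix i j assume "i \<in> I" "j \<in> I"
    then have "Y0 j i = cnj (Y0 i j)" by (rule Her_sym[OF assms])
    then show "Re (Y i j * Y0 j i) = Re (Y i j * cnj (Y0 i j))" by simp
  qed
  finally show ?thesis .
qed

lemma cmod_expand: "(cmod (a + of_real t * b))^2 = (cmod a)^2 + 2 * t * Re (b * cnj a) + t^2 * (cmod b)^2"
  unfolding cmod_power2 by (simp add: power2_eq_square algebra_simps)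


lemma compact_PiE_const:
  fixes K :: "'b::topological_space set"
  assumes "compact K" shows "compact (PiE (UNIV :: 'a set) (\<lambda>_. K))"
  using compactin_PiE[of "\<lambda>_. euclidean" UNIV "\<lambda>_. K"] assms
  by (simp add: euclidean_product_topology)

lemma cont_coord3: "continuous_on UNIV (\<lambda>f :: nat \<Rightarrow> op. f m i j)"
proof -
  have "continuous_on UNIV (\<lambda>f :: nat \<Rightarrow> op. f m)" by simp
  then have "continuous_on UNIV (\<lambda>f :: nat \<Rightarrow> op. f m i)" by (rule continuous_on_product_then_coordinatewise)
  then show ?thesis by (rule continuous_on_product_then_coordinatewise)
qed
lemma cont_coord2: "continuous_on UNIV (\<lambda>f :: op. f i j)"
proof -
  have "continuous_on UNIV (\<lambda>f :: op. f i)" by simp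
  then show ?thesis by (rule continuous_on_product_then_coordinatewise)
qed

lemma cont_coord3_comp:
  "continuous_on S g \<Longrightarrow> continuous_on S (\<lambda>x. (g x :: nat \<Rightarrow> op) m i j)"
  using continuous_on_compose2[OF cont_coord3 _ subset_UNIV] by blast

lemma cont_coord2_comp:
  "continuous_on S g \<Longrightarrow> continuous_on S (\<lambda>x. (g x :: op) i j)"
  using continuous_on_compose2[OF cont_coord2 _ subset_UNIV] by blast

lemma box_mem: "\<Phi> \<in> PiE UNIV (\<lambda>_. PiE UNIV (\<lambda>_. PiE UNIV (\<lambda>_. cball (0::complex) R)))
   \<longleftrightarrow> (\<forall>m i j. cmod (\<Phi> m i j) \<le> R)"
  by (simp add: PiE_UNIV_domain Pi_iff)

lemma box2_mem: "\<phi> \<in> PiE UNIV (\<lambda>_. PiE UNIV (\<lambda>_. cball (0::complex) R))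
   \<longleftrightarrow> (\<forall>i j. cmod (\<phi> i j) \<le> R)"
  by (simp add: PiE_UNIV_domain Pi_iff)
lemma cont_fst3: "continuous_on UNIV (\<lambda>x :: (nat \<Rightarrow> op) \<times> op \<times> real. fst x m i j)"
  by (rule cont_coord3_comp[OF continuous_on_fst[OF continuous_on_id]])

lemma cont_fst2: "continuous_on UNIV (\<lambda>x :: (nat \<Rightarrow> op) \<times> op \<times> real. fst (snd x) i j)"
  by (rule cont_coord2_comp[OF continuous_on_fst[OF continuous_on_snd[OF continuous_on_id]]])

lemma test_cont: "continuous_on UNIV (\<lambda>x :: (nat \<Rightarrow> op) \<times> op \<times> real.
   (\<Sum>i\<in>I. \<Sum>j\<in>I. (cmod ((\<Sum>m=1..M. fst x m i j) - fst (snd x) i j))^2) + (snd (snd x) - z)^2)"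
  by (intro continuous_on_add continuous_on_sum continuous_on_power continuous_on_norm continuous_on_diff
      cont_fst3 cont_fst2 continuous_on_snd continuous_on_id continuous_on_const)
lemma inner_op_scaleR2: "inner_op I A (c *\<^sub>R X) = c * inner_op I A X"
  by (simp add: inner_op_def scaleR_fun_def scaleR_conv_of_real sum_distrib_left mult.left_commute)

lemma small_t_aux:
  fixes A B :: real
  assumes "\<And>t. 0 < t \<Longrightarrow> t \<le> 1 \<Longrightarrow> 0 \<le> 2 * A + t * B"
  shows "0 \<le> A"
proof (rule ccontr)
  assume "\<not> 0 \<le> A" then have A: "A < 0" by simp
  define t where "t = min 1 (- A / (\<bar>B\<bar> + 1))"
  have "0 < \<bar>B\<bar> + 1" by simp
  then have "A / (\<bar>B\<bar> + 1) < 0" by (rule divide_neg_pos[OF A])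
  then have "0 < - A / (\<bar>B\<bar> + 1)" by (simp add: minus_divide_left[symmetric])
  then have t0: "0 < t" by (simp add: t_def)
  have t1: "t \<le> 1" by (simp add: t_def)
  have "t \<le> - A / (\<bar>B\<bar> + 1)" by (simp add: t_def)
  then have "t * (\<bar>B\<bar> + 1) \<le> (- A / (\<bar>B\<bar> + 1)) * (\<bar>B\<bar> + 1)"
    by (rule mult_right_mono) simp
  also have "\<dots> = - A" using \<open>0 < \<bar>B\<bar> + 1\<close> by simp
  finally have "t * (\<bar>B\<bar> + 1) \<le> - A" .
  then have "t * \<bar>B\<bar> < - A" using t0 by (simp add: algebra_simps)
  moreover have "t * B \<le> t * \<bar>B\<bar>" using t0 by (simp add: mult_left_mono)
  ultimately have "2 * A + t * B < 0" using A by linarith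
  with assms[OF t0 t1] show False by simp
qed

lemma abs_le_1_sq: "\<bar>y::real\<bar> \<le> 1 + y^2"
proof (cases "\<bar>y\<bar> \<le> 1")
  case True then show ?thesis by (simp add: add_increasing2)
next
  case False
  then have "\<bar>y\<bar> * 1 \<le> \<bar>y\<bar> * \<bar>y\<bar>" by (intro mult_left_mono) auto
  then have "\<bar>y\<bar> \<le> y^2" by (simp add: power2_eq_square abs_mult_self_eq)
  then show ?thesis by simp
qed


lemma trace_sum: "trace I (\<Sum>m\<in>K. F m) = (\<Sum>m\<in>K. trace I (F m))"
  unfolding trace_def sum_fun_app by (rule sum.swap)

lemma trace_le_sum:
  fixes M :: nat
  assumes "finite I" "\<And>m. m \<in> {1..M} \<Longrightarrow> Pos I (\<Phi> m)" "m \<in> {1..M}"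
  shows "Re (trace I (\<Phi> m)) \<le> Re (trace I (\<Sum>m=1..M. \<Phi> m))"
proof -
  have "Re (trace I (\<Sum>m=1..M. \<Phi> m)) = (\<Sum>m'=1..M. Re (trace I (\<Phi> m')))"
    by (simp add: trace_sum)
  moreover have "Re (trace I (\<Phi> m)) \<le> (\<Sum>m'=1..M. Re (trace I (\<Phi> m')))"
    by (rule member_le_sum) (use assms trace_Re_nonneg in auto)
  ultimately show ?thesis by simp
qed

lemma entry_sum: "(\<Sum>m\<in>K. (\<Phi> m :: op)) i j = (\<Sum>m\<in>K. \<Phi> m i j)"
  by (simp add: sum_fun_app)

lemma inner_op_uminus1: "inner_op I (- A) X = - inner_op I A X"
  by (simp add: inner_op_def sum_negf)

lemma scaleR_app: "(c *\<^sub>R f) x = c *\<^sub>R f x"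
  by (simp add: scaleR_fun_def)

lemma core:
  fixes I :: "idx set" and M :: nat and C :: "(nat \<Rightarrow> op) set" and S :: "op set"
    and Pf :: "(nat \<Rightarrow> op) \<Rightarrow> real" and z BS :: real and \<Phi>0 :: "nat \<Rightarrow> op"
  assumes finI: "finite I"
    and Ccl: "closed C" and Ccv: "convex C" and Ccone: "cone C"
    and Cpos: "\<And>\<Phi> m. \<Phi> \<in> C \<Longrightarrow> m \<in> {1..M} \<Longrightarrow> Pos I (\<Phi> m)"
    and Cz: "\<And>\<Phi> m. \<Phi> \<in> C \<Longrightarrow> m \<notin> {1..M} \<Longrightarrow> \<Phi> m = 0"
    and Scl: "closed S" and Scv: "convex S"
    and Spos: "\<And>\<phi>. \<phi> \<in> S \<Longrightarrow> Pos I \<phi>" and Sb: "\<And>\<phi>. \<phi> \<in> S \<Longrightarrow> Re (trace I \<phi>) \<le> BS"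
    and Pcont: "continuous_on UNIV Pf"
    and Plin: "\<And>a b \<Phi> \<Psi>. Pf (a *\<^sub>R \<Phi> + b *\<^sub>R \<Psi>) = a * Pf \<Phi> + b * Pf \<Psi>"
    and ex0: "\<Phi>0 \<in> C" "(\<Sum>m=1..M. \<Phi>0 m) \<in> S"
    and lt: "\<And>\<Phi>. \<Phi> \<in> C \<Longrightarrow> (\<Sum>m=1..M. \<Phi> m) \<in> S \<Longrightarrow> Pf \<Phi> < z"
  shows "\<exists>chi. Her I chi \<and> (\<forall>\<Phi>\<in>C. Pf \<Phi> \<le> inner_op I (\<Sum>m=1..M. \<Phi> m) chi) \<and>
             (\<forall>\<phi>\<in>S. inner_op I \<phi> chi \<le> z)"
proof -
  define G :: "(nat \<Rightarrow> op) \<times> op \<times> real \<Rightarrow> op" where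
    "G = (\<lambda>x. (\<Sum>m=1..M. fst x m) - fst (snd x))"
  define Q :: "(nat \<Rightarrow> op) \<times> op \<times> real \<Rightarrow> real" where
    "Q = (\<lambda>x. (\<Sum>i\<in>I. \<Sum>j\<in>I. (cmod ((\<Sum>m=1..M. fst x m i j) - fst (snd x) i j))^2) + (snd (snd x) - z)^2)"
  have Gij: "G x i j = (\<Sum>m=1..M. fst x m i j) - fst (snd x) i j" for x i j
    by (simp add: G_def sum_fun_app)
  have QG: "Q x = (\<Sum>i\<in>I. \<Sum>j\<in>I. (cmod (G x i j))^2) + (snd (snd x) - z)^2" for x
    by (simp add: Q_def Gij)
  define D where "D = {x :: (nat \<Rightarrow> op) \<times> op \<times> real. fst x \<in> C \<and> fst (snd x) \<in> S \<and> snd (snd x) \<le> Pf (fst x)}"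
  define x1 where "x1 = (\<Phi>0, (\<Sum>m=1..M. \<Phi>0 m), Pf \<Phi>0)"
  define c1 where "c1 = Q x1"
  define K where "K = D \<inter> {x. Q x \<le> c1}"
  have x1D: "x1 \<in> D" using ex0 by (simp add: D_def x1_def)
  have x1K: "x1 \<in> K" using x1D by (simp add: K_def c1_def)
  have Qnn: "0 \<le> Q x" for x unfolding Q_def by (intro add_nonneg_nonneg sum_nonneg) auto
  have Qcont: "continuous_on UNIV Q" unfolding Q_def by (rule test_cont)
  have BS0: "0 \<le> BS" using Sb[OF ex0(2)] trace_Re_nonneg(2)[OF Spos[OF ex0(2)] finI] by linarith
  have c10: "0 \<le> c1" using Qnn by (simp add: c1_def)
  have Dcl: "closed D"
  proof -
    have "D = (C \<times> S \<times> UNIV) \<inter> {x. snd (snd x) \<le> Pf (fst x)}" by (auto simp: D_def)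
    moreover have "closed (C \<times> S \<times> (UNIV :: real set))"
      by (intro closed_Times Ccl Scl closed_UNIV)
    moreover have "closed {x :: (nat \<Rightarrow> op) \<times> op \<times> real. snd (snd x) \<le> Pf (fst x)}"
      by (rule closed_Collect_le[OF continuous_on_snd[OF continuous_on_snd[OF continuous_on_id]]
            continuous_on_compose2[OF Pcont continuous_on_fst[OF continuous_on_id] subset_UNIV]])
    ultimately show ?thesis by (simp add: closed_Int)
  qed
  have Kcl: "closed K"
    unfolding K_def by (intro closed_Int Dcl closed_Collect_le[OF Qcont continuous_on_const])
  define R where "R = real (card I) * (1 + c1) + BS"
  have R0: "0 \<le> R" using BS0 c10 by (simp add: R_def)
  define Box :: "((nat \<Rightarrow> op) \<times> op \<times> real) set" where
    "Box = PiE UNIV (\<lambda>_. PiE UNIV (\<lambda>_. PiE UNIV (\<lambda>_. cball (0::complex) R))) \<times>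
           PiE UNIV (\<lambda>_. PiE UNIV (\<lambda>_. cball (0::complex) R)) \<times> cball z (1 + c1)"
  have Boxc: "compact Box"
    unfolding Box_def by (intro compact_Times compact_PiE_const compact_cball)
  have KBox: "K \<subseteq> Box"
  proof
    fix x assume xK: "x \<in> K"
    obtain \<Phi> \<phi> r where xe: "x = (\<Phi>, \<phi>, r)" by (cases x) auto
    have \<Phi>C: "\<Phi> \<in> C" and \<phi>S: "\<phi> \<in> S" and Qx: "Q x \<le> c1" using xK by (auto simp: K_def D_def xe)
    have Gx: "G x i j = (\<Sum>m=1..M. \<Phi> m i j) - \<phi> i j" for i j by (simp add: Gij xe)
    have sq_le: "(cmod (G x i j))^2 \<le> Q x" if "i \<in> I" "j \<in> I" for i j
    proof -
      have "(cmod (G x i j))^2 \<le> (\<Sum>j\<in>I. (cmod (G x i j))^2)"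
        by (rule member_le_sum) (use that finI in auto)
      also have "\<dots> \<le> (\<Sum>i\<in>I. \<Sum>j\<in>I. (cmod (G x i j))^2)"
        by (rule member_le_sum[where f = "\<lambda>i. \<Sum>j\<in>I. (cmod (G x i j))^2"]) (use that finI in \<open>auto intro: sum_nonneg\<close>)
      also have "\<dots> \<le> Q x" by (simp add: QG)
      finally show ?thesis .
    qed
    have bphi: "cmod (\<phi> i j) \<le> R" for i j
      using Pos_entry_le_trace[OF Spos[OF \<phi>S] finI, of i j] Sb[OF \<phi>S] c10
      unfolding R_def by (smt (verit) of_nat_0_le_iff mult_nonneg_nonneg)
    have trS: "Re (trace I (\<Sum>m=1..M. \<Phi> m)) \<le> R"
    proof -
      have "Re (trace I (\<Sum>m=1..M. \<Phi> m)) = (\<Sum>i\<in>I. Re (G x i i) + Re (\<phi> i i))"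
        by (simp add: trace_def Re_sum entry_sum Gx)
      also have "\<dots> \<le> (\<Sum>i\<in>I. (1 + c1) + Re (\<phi> i i))"
      proof (rule sum_mono)
        fix i assume i: "i \<in> I"
        have "Re (G x i i) \<le> cmod (G x i i)" by (rule complex_Re_le_cmod)
        also have "\<dots> \<le> 1 + (cmod (G x i i))^2" using abs_le_1_sq[of "cmod (G x i i)"] by simp
        also have "\<dots> \<le> 1 + c1" using sq_le[OF i i] Qx by simp
        finally show "Re (G x i i) + Re (\<phi> i i) \<le> (1 + c1) + Re (\<phi> i i)" by simp
      qed
      also have "\<dots> = real (card I) * (1 + c1) + Re (trace I \<phi>)"
        by (simp add: sum.distrib trace_def Re_sum)
      also have "\<dots> \<le> R" using Sb[OF \<phi>S] by (simp add: R_def)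
      finally show ?thesis .
    qed
    have bPhi: "cmod (\<Phi> m i j) \<le> R" for m i j
    proof (cases "m \<in> {1..M}")
      case True
      have "cmod (\<Phi> m i j) \<le> Re (trace I (\<Phi> m))" by (rule Pos_entry_le_trace[OF Cpos[OF \<Phi>C True] finI])
      also have "\<dots> \<le> Re (trace I (\<Sum>m=1..M. \<Phi> m))" by (rule trace_le_sum[OF finI Cpos[OF \<Phi>C] True])
      finally show ?thesis using trS by simp
    next
      case False then show ?thesis using Cz[OF \<Phi>C False] R0 by simp
    qed
    have br: "r \<in> cball z (1 + c1)"
    proof -
      have "(r - z)^2 \<le> Q x" by (simp add: QG xe add_increasing sum_nonneg)
      then have "\<bar>r - z\<bar> \<le> 1 + c1" using abs_le_1_sq[of "r - z"] Qx by linarith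
      then show ?thesis by (simp add: dist_real_def abs_minus_commute)
    qed
    show "x \<in> Box" unfolding Box_def xe using bphi bPhi br by (simp add: box_mem box2_mem)
  qed
  have Kc: "compact K"
  proof -
    have "K = Box \<inter> K" using KBox by blast
    then show ?thesis using compact_Int_closed[OF Boxc Kcl] by simp
  qed
  obtain x0 where x0K: "x0 \<in> K" and x0min: "\<And>y. y \<in> K \<Longrightarrow> Q x0 \<le> Q y"
    using continuous_attains_inf[OF Kc _ continuous_on_subset[OF Qcont subset_UNIV]] x1K by blast
  have minD: "Q x0 \<le> Q x" if "x \<in> D" for x
  proof (cases "Q x \<le> c1")
    case True then show ?thesis using x0min that by (simp add: K_def)
  next
    case False then show ?thesis using x0K by (simp add: K_def)
  qed
  obtain \<Phi>s \<phi>s rs where x0e: "x0 = (\<Phi>s, \<phi>s, rs)" by (cases x0) auto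
  have \<Phi>sC: "\<Phi>s \<in> C" and \<phi>sS: "\<phi>s \<in> S" and rsle: "rs \<le> Pf \<Phi>s"
    using x0K by (auto simp: K_def D_def x0e)
  define Y0 where "Y0 = G x0"
  define s0 where "s0 = rs - z"
  have HY0: "Her I Y0"
    unfolding Y0_def G_def x0e
    by (auto intro!: Her_diff Her_sum Pos_Her[OF Cpos[OF \<Phi>sC]] Pos_Her[OF Spos[OF \<phi>sS]])
  define N where "N = inner_op I Y0 Y0"
  have Nsum: "N = (\<Sum>i\<in>I. \<Sum>j\<in>I. (cmod (Y0 i j))^2)"
    unfolding N_def inner_op_Her2[OF HY0]
    by (rule sum.cong[OF refl], rule sum.cong[OF refl]) (simp add: complex_norm_square[symmetric])
  have Qx0: "Q x0 = N + s0^2" by (simp add: QG Nsum Y0_def s0_def x0e)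
  have Nnn: "0 \<le> N" unfolding Nsum by (intro sum_nonneg) auto
  have Qpos: "0 < Q x0"
  proof (rule ccontr)
    assume "\<not> 0 < Q x0" then have "Q x0 = 0" using Qnn[of x0] by simp
    then have N0: "N = 0" and s00: "s0 = 0" using Qx0 Nnn by (auto simp: add_nonneg_eq_0_iff)
    have Y0z: "Y0 i j = 0" if i: "i \<in> I" and j: "j \<in> I" for i j
    proof -
      have "(\<Sum>j\<in>I. (cmod (Y0 i j))^2) = 0"
        using N0 unfolding Nsum by (subst (asm) sum_nonneg_eq_0_iff) (auto intro: sum_nonneg finI i)
      then have "(cmod (Y0 i j))^2 = 0"
        by (subst (asm) sum_nonneg_eq_0_iff) (auto intro: finI j)
      then show ?thesis by simp
    qed
    have eqS: "(\<Sum>m=1..M. \<Phi>s m) = \<phi>s"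
    proof (intro ext)
      fix i j
      show "(\<Sum>m=1..M. \<Phi>s m) i j = \<phi>s i j"
      proof (cases "i \<in> I \<and> j \<in> I")
        case True
        then show ?thesis using Y0z[of i j] by (simp add: Y0_def Gij x0e sum_fun_app)
      next
        case False
        then have h: "i \<notin> I \<or> j \<notin> I" by blast
        have "\<Phi>s m i j = 0" if "m \<in> {1..M}" for m
          by (rule Her_out[OF Pos_Her[OF Cpos[OF \<Phi>sC that]] h])
        moreover have "\<phi>s i j = 0" by (rule Her_out[OF Pos_Her[OF Spos[OF \<phi>sS]] h])
        ultimately show ?thesis by (simp add: sum_fun_app)
      qed
    qed
    have "Pf \<Phi>s < z" using lt[OF \<Phi>sC] eqS \<phi>sS by simp
    moreover have "rs = z" using s00 by (simp add: s0_def)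
    ultimately show False using rsle by simp
  qed
  have var: "0 \<le> inner_op I (G x - Y0) Y0 + s0 * (snd (snd x) - rs)" if xD: "x \<in> D" for x
  proof -
    obtain \<Phi> \<phi> r where xe: "x = (\<Phi>, \<phi>, r)" by (cases x) auto
    have \<Phi>C: "\<Phi> \<in> C" and \<phi>S: "\<phi> \<in> S" and rle: "r \<le> Pf \<Phi>" using xD by (auto simp: D_def xe)
    define V where "V = G x - Y0"
    define w where "w = r - rs"
    define A where "A = inner_op I V Y0 + s0 * w"
    define B where "B = (\<Sum>i\<in>I. \<Sum>j\<in>I. (cmod (V i j))^2) + w^2"
    have "0 \<le> A"
    proof (rule small_t_aux)
      fix t :: real assume t0: "0 < t" and t1: "t \<le> 1"
      define xt where "xt = ((1 - t) *\<^sub>R \<Phi>s + t *\<^sub>R \<Phi>, (1 - t) *\<^sub>R \<phi>s + t *\<^sub>R \<phi>, (1 - t) * rs + t * r)"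
      have xtD: "xt \<in> D"
      proof -
        have "(1 - t) *\<^sub>R \<Phi>s + t *\<^sub>R \<Phi> \<in> C"
          by (rule convexD[OF Ccv \<Phi>sC \<Phi>C]) (use t0 t1 in auto)
        moreover have "(1 - t) *\<^sub>R \<phi>s + t *\<^sub>R \<phi> \<in> S"
          by (rule convexD[OF Scv \<phi>sS \<phi>S]) (use t0 t1 in auto)
        moreover have "(1 - t) * rs + t * r \<le> Pf ((1 - t) *\<^sub>R \<Phi>s + t *\<^sub>R \<Phi>)"
        proof -
          have "(1 - t) * rs \<le> (1 - t) * Pf \<Phi>s" using rsle t1 by (intro mult_left_mono) auto
          moreover have "t * r \<le> t * Pf \<Phi>" using rle t0 by (intro mult_left_mono) auto
          ultimately show ?thesis by (simp add: Plin)
        qed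
        ultimately show ?thesis by (simp add: D_def xt_def)
      qed
      have Gxt: "G xt i j = Y0 i j + of_real t * V i j" for i j
      proof -
        have "G xt i j = (\<Sum>m=1..M. of_real (1 - t) * \<Phi>s m i j + of_real t * \<Phi> m i j)
                 - (of_real (1 - t) * \<phi>s i j + of_real t * \<phi> i j)"
          by (simp add: Gij xt_def scaleR_fun_def scaleR_conv_of_real)
        also have "\<dots> = of_real (1 - t) * (\<Sum>m=1..M. \<Phi>s m i j) + of_real t * (\<Sum>m=1..M. \<Phi> m i j)
                 - (of_real (1 - t) * \<phi>s i j + of_real t * \<phi> i j)"
          by (simp only: sum.distrib sum_distrib_left)
        also have "\<dots> = of_real (1 - t) * ((\<Sum>m=1..M. \<Phi>s m i j) - \<phi>s i j)
                        + of_real t * ((\<Sum>m=1..M. \<Phi> m i j) - \<phi> i j)"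
          by (simp only: algebra_simps)
        also have "\<dots> = Y0 i j + of_real t * V i j"
          by (simp add: V_def Y0_def Gij x0e xe algebra_simps)
        finally show ?thesis .
      qed
      have "Q xt = (\<Sum>i\<in>I. \<Sum>j\<in>I. (cmod (Y0 i j + of_real t * V i j))^2) + (s0 + t * w)^2"
        unfolding QG Gxt by (simp add: xt_def s0_def w_def algebra_simps)
      also have "\<dots> = (\<Sum>i\<in>I. \<Sum>j\<in>I. (cmod (Y0 i j))^2 + 2 * t * Re (V i j * cnj (Y0 i j)) + t^2 * (cmod (V i j))^2)
                      + (s0 + t * w)^2"
        by (simp only: cmod_expand)
      also have "\<dots> = N + 2 * t * inner_op I V Y0 + t^2 * (\<Sum>i\<in>I. \<Sum>j\<in>I. (cmod (V i j))^2) + (s0 + t * w)^2"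
        by (simp only: Nsum inner_op_Her2[OF HY0] sum.distrib sum_distrib_left[symmetric])
      also have "\<dots> = Q x0 + t * (2 * A + t * B)"
        by (simp add: Qx0 A_def B_def power2_eq_square algebra_simps)
      finally have "Q xt = Q x0 + t * (2 * A + t * B)" .
      with minD[OF xtD] have "0 \<le> t * (2 * A + t * B)" by simp
      then show "0 \<le> 2 * A + t * B" using t0 by (simp add: zero_le_mult_iff)
    qed
    then show ?thesis by (simp add: A_def V_def w_def xe)
  qed
  have s0neg: "s0 < 0"
  proof (rule ccontr)
    assume "\<not> s0 < 0" then have s0p: "0 \<le> s0" by simp
    have "G x1 = 0" by (simp add: G_def x1_def)
    then have "0 \<le> - N + s0 * (Pf \<Phi>0 - rs)"
      using var[OF x1D] by (simp add: inner_op_diff1 inner_op_zero1 inner_op_uminus1 N_def x1_def)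
    moreover have "Pf \<Phi>0 < z" by (rule lt[OF ex0])
    then have "s0 * (Pf \<Phi>0 - rs) \<le> s0 * (z - rs)" using s0p by (intro mult_left_mono) auto
    moreover have "s0 * (z - rs) = - (s0^2)" by (simp add: s0_def power2_eq_square algebra_simps)
    ultimately have "0 \<le> - Q x0" using Qx0 by linarith
    then show False using Qpos by simp
  qed
  define lam where "lam = - s0"
  have lam0: "0 < lam" using s0neg by (simp add: lam_def)
  define chi where "chi = (1 / lam) *\<^sub>R Y0"
  have key: "inner_op I (\<Sum>m=1..M. \<Phi> m) chi - inner_op I \<phi> chi > Pf \<Phi> - z"
    if \<Phi>C: "\<Phi> \<in> C" and \<phi>S: "\<phi> \<in> S" for \<Phi> \<phi>
  proof -
    let ?x = "(\<Phi>, \<phi>, Pf \<Phi>)"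
    have xD: "?x \<in> D" using \<Phi>C \<phi>S by (simp add: D_def)
    have "0 \<le> inner_op I (G ?x) Y0 - N + s0 * (Pf \<Phi> - rs)"
      using var[OF xD] by (simp add: inner_op_diff1 N_def)
    then have "inner_op I (G ?x) Y0 - lam * Pf \<Phi> \<ge> N + s0 * rs" by (simp add: lam_def algebra_simps)
    moreover have "N + s0 * rs = Q x0 + s0 * z" using Qx0 by (simp add: s0_def power2_eq_square algebra_simps)
    ultimately have "inner_op I (G ?x) Y0 - lam * Pf \<Phi> > - lam * z" using Qpos by (simp add: lam_def)
    then have "inner_op I (G ?x) Y0 > lam * (Pf \<Phi> - z)" by (simp add: algebra_simps)
    then have "(1 / lam) * inner_op I (G ?x) Y0 > (1 / lam) * (lam * (Pf \<Phi> - z))"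
      using lam0 by (intro mult_strict_left_mono) auto
    then have "inner_op I (G ?x) chi > Pf \<Phi> - z"
      using lam0 by (simp add: chi_def inner_op_scaleR2)
    then show ?thesis by (simp add: G_def inner_op_diff1)
  qed
  have zeroC: "0 \<in> C" using Ccone ex0(1) unfolding cone_def by (metis order_refl scaleR_zero_left)
  have Pf0: "Pf 0 = 0" using Plin[of 0 \<Phi>0 0 \<Phi>0] by simp
  have part1: "inner_op I \<phi> chi \<le> z" if "\<phi> \<in> S" for \<phi>
    using key[OF zeroC that] Pf0 by (simp add: inner_op_zero1)
  have part2: "Pf \<Phi> \<le> inner_op I (\<Sum>m=1..M. \<Phi> m) chi" if \<Phi>C: "\<Phi> \<in> C" for \<Phi>
  proof (rule ccontr)
    assume "\<not> ?thesis"
    then have d: "inner_op I (\<Sum>m=1..M. \<Phi> m) chi - Pf \<Phi> < 0" by simp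
    define e where "e = z - inner_op I (\<Sum>m=1..M. \<Phi>0 m) chi"
    have e0: "0 < e" using key[OF zeroC ex0(2)] Pf0 by (simp add: e_def inner_op_zero1)
    define c where "c = e / (Pf \<Phi> - inner_op I (\<Sum>m=1..M. \<Phi> m) chi)"
    have c0: "0 \<le> c" using d e0 by (simp add: c_def)
    have cC: "c *\<^sub>R \<Phi> \<in> C" using Ccone \<Phi>C c0 unfolding cone_def by blast
    have sc: "(\<Sum>m=1..M. (c *\<^sub>R \<Phi>) m) = c *\<^sub>R (\<Sum>m=1..M. \<Phi> m)"
      by (simp only: scaleR_app scaleR_sum_right)
    have Pfc: "Pf (c *\<^sub>R \<Phi>) = c * Pf \<Phi>" using Plin[of c \<Phi> 0 \<Phi>] by simp
    have "c * inner_op I (\<Sum>m=1..M. \<Phi> m) chi - inner_op I (\<Sum>m=1..M. \<Phi>0 m) chi > c * Pf \<Phi> - z"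
      using key[OF cC ex0(2)] unfolding sc Pfc inner_op_scaleR1 by simp
    then have "c * (Pf \<Phi> - inner_op I (\<Sum>m=1..M. \<Phi> m) chi) < e" by (simp add: e_def algebra_simps)
    moreover have "c * (Pf \<Phi> - inner_op I (\<Sum>m=1..M. \<Phi> m) chi) = e" using d by (simp add: c_def)
    ultimately show False by simp
  qed
  have "Her I chi" unfolding chi_def by (rule Her_scaleR[OF HY0])
  then show ?thesis using part1 part2 by blast
qed



lemma inner_bound:
  assumes "\<And>i j. cmod (A i j) \<le> c"
  shows "inner_op I A X \<le> (\<Sum>i\<in>I. \<Sum>j\<in>I. c * cmod (X j i))"
proof -
  have "inner_op I A X \<le> cmod (\<Sum>i\<in>I. \<Sum>j\<in>I. A i j * X j i)"
    unfolding inner_op_def by (rule complex_Re_le_cmod)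
  also have "\<dots> \<le> (\<Sum>i\<in>I. cmod (\<Sum>j\<in>I. A i j * X j i))" by (rule norm_sum)
  also have "\<dots> \<le> (\<Sum>i\<in>I. \<Sum>j\<in>I. cmod (A i j * X j i))" by (intro sum_mono norm_sum)
  also have "\<dots> \<le> (\<Sum>i\<in>I. \<Sum>j\<in>I. c * cmod (X j i))"
    by (intro sum_mono) (simp add: norm_mult mult_right_mono assms)
  finally show ?thesis .
qed

lemma Pobj_lin: "Pobj M I p E (a *\<^sub>R \<Phi> + b *\<^sub>R \<Psi>) = a * Pobj M I p E \<Phi> + b * Pobj M I p E \<Psi>"
proof -
  have "inner_op I ((a *\<^sub>R \<Phi> + b *\<^sub>R \<Psi>) m) X = a * inner_op I (\<Phi> m) X + b * inner_op I (\<Psi> m) X" for m X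
    by (simp only: plus_fun_apply scaleR_app inner_op_add1 inner_op_scaleR1)
  then show ?thesis
    unfolding Pobj_def by (simp add: sum.distrib sum_distrib_left algebra_simps)
qed

lemma Pobj_cont: "continuous_on UNIV (Pobj M I p E)"
proof -
  have "continuous_on UNIV (\<lambda>\<Phi>::nat \<Rightarrow> op. \<Sum>m=1..M. p m * Re (\<Sum>i\<in>I. \<Sum>j\<in>I. \<Phi> m i j * E m j i))"
    by (intro continuous_on_sum continuous_on_mult continuous_on_const continuous_on_Re
        cont_coord3_comp continuous_on_id)
  then show ?thesis by (simp add: Pobj_def inner_op_def fun_eq_iff)
qed

lemma DC_sum: "(\<Sum>m=1..M. inner_op I (\<Phi> m) (X - p m *\<^sub>R E m)) = inner_op I (\<Sum>m=1..M. \<Phi> m) X - Pobj M I p E \<Phi>"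
  by (simp only: inner_op_diff2 sum_subtractf inner_op_sum1 Pobj_def)

theorem theorem1:
  fixes T M :: nat and dV dW :: "nat \<Rightarrow> nat"
    and E :: "nat \<Rightarrow> op" and p :: "nat \<Rightarrow> real"
    and \<P> \<C> :: "(nat \<Rightarrow> op) set" and \<S> :: "op set"
  assumes "T \<ge> 1"
    and "\<forall>t\<in>{1..T}. dV t \<ge> 1 \<and> dW t \<ge> 1"
    and "M \<ge> 1"
    and "\<forall>m\<in>{1..M}. E m \<in> Comb T dW dV"
    and "\<forall>m\<in>{1..M}. p m \<ge> 0" and "(\<Sum>m=1..M. p m) = 1"
    and "\<P> \<noteq> {}" and "\<P> \<subseteq> PG M T dW dV"
    and "closed \<C>" and "convex \<C>" and "cone \<C>" and "\<C> \<subseteq> CG M T dW dV"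
    and "closed \<S>" and "convex \<S>" and "\<S> \<subseteq> SG T dW dV"
    and "closure (convex hull \<P>) = {\<Phi> \<in> \<C>. (\<Sum>m=1..M. \<Phi> m) \<in> \<S>}"
  shows "(SUP \<Phi>\<in>\<P>. ereal (Pobj M (Lev dW dV T) p E \<Phi>)) =
         (INF X\<in>DC M (Lev dW dV T) p E \<C>. ereal (DS (Lev dW dV T) \<S> X))"
proof -
  define I where "I = Lev dW dV T"
  have finI: "finite I" by (simp add: I_def finite_Lev)
  define F where "F = {\<Phi> \<in> \<C>. (\<Sum>m=1..M. \<Phi> m) \<in> \<S>}"
  have clo: "closure (convex hull \<P>) = F" using assms(16) by (simp add: F_def)
  have PF: "\<P> \<subseteq> F"
  proof -
    have "\<P> \<subseteq> convex hull \<P>" by (rule hull_subset)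
    also have "\<dots> \<subseteq> closure (convex hull \<P>)" by (rule closure_subset)
    finally show ?thesis using clo by simp
  qed
  define BS where "BS = real (\<Prod>s\<in>{1..T}. dW s)"
  have Spos: "Pos I \<phi>" if "\<phi> \<in> \<S>" for \<phi>
    using assms(15) that by (auto simp: SG_def CombDual_def I_def)
  have Sb: "Re (trace I \<phi>) \<le> BS" if "\<phi> \<in> \<S>" for \<phi>
  proof -
    have "\<phi> \<in> CombDual T dW dV" using assms(15) that by (auto simp: SG_def)
    then show ?thesis using trace_CombDual[of \<phi> T dW dV] assms(1) by (simp add: I_def BS_def del: of_nat_prod)
  qed
  have Cpos: "Pos I (\<Phi> m)" if "\<Phi> \<in> \<C>" "m \<in> {1..M}" for \<Phi> m
    using assms(12) that by (auto simp: CG_def I_def)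
  have Cz: "\<Phi> m = 0" if "\<Phi> \<in> \<C>" "m \<notin> {1..M}" for \<Phi> m
    using assms(12) that by (auto simp: CG_def)
  have Sent: "cmod (\<phi> i j) \<le> BS" if "\<phi> \<in> \<S>" for \<phi> i j
    using Pos_entry_le_trace[OF Spos[OF that] finI, of i j] Sb[OF that] by simp
  have Sne: "\<S> \<noteq> {}" using PF assms(7) by (auto simp: F_def)
  have bdd: "bdd_above ((\<lambda>\<phi>. inner_op I \<phi> X) ` \<S>)" for X
    by (rule bdd_aboveI2[where M = "\<Sum>i\<in>I. \<Sum>j\<in>I. BS * cmod (X j i)"]) (rule inner_bound[OF Sent])
  have weak: "Pobj M I p E \<Phi> \<le> DS I \<S> X" if "\<Phi> \<in> \<P>" "X \<in> DC M I p E \<C>" for \<Phi> X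
  proof -
    have \<Phi>F: "\<Phi> \<in> \<C>" "(\<Sum>m=1..M. \<Phi> m) \<in> \<S>" using PF that(1) by (auto simp: F_def)
    have "0 \<le> (\<Sum>m=1..M. inner_op I (\<Phi> m) (X - p m *\<^sub>R E m))"
      using that(2) \<Phi>F(1) by (simp add: DC_def)
    then have "0 \<le> inner_op I (\<Sum>m=1..M. \<Phi> m) X - Pobj M I p E \<Phi>" by (simp only: DC_sum)
    then have "Pobj M I p E \<Phi> \<le> inner_op I (\<Sum>m=1..M. \<Phi> m) X" by simp
    also have "\<dots> \<le> DS I \<S> X"
      unfolding DS_def by (rule cSup_upper[OF imageI[OF \<Phi>F(2)] bdd])
    finally show ?thesis .
  qed
  have le1: "(SUP \<Phi>\<in>\<P>. ereal (Pobj M I p E \<Phi>)) \<le> (INF X\<in>DC M I p E \<C>. ereal (DS I \<S> X))"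
    by (intro SUP_least INF_greatest) (simp add: weak)
  have le2: "(INF X\<in>DC M I p E \<C>. ereal (DS I \<S> X)) \<le> (SUP \<Phi>\<in>\<P>. ereal (Pobj M I p E \<Phi>))"
  proof (cases "(SUP \<Phi>\<in>\<P>. ereal (Pobj M I p E \<Phi>)) = \<infinity>")
    case True then show ?thesis by simp
  next
    case False
    obtain \<Phi>0 where \<Phi>0P: "\<Phi>0 \<in> \<P>" using assms(7) by blast
    have "ereal (Pobj M I p E \<Phi>0) \<le> (SUP \<Phi>\<in>\<P>. ereal (Pobj M I p E \<Phi>))"
      using \<Phi>0P by (rule SUP_upper)
    then obtain v where v: "(SUP \<Phi>\<in>\<P>. ereal (Pobj M I p E \<Phi>)) = ereal v"
      using False by (cases "(SUP \<Phi>\<in>\<P>. ereal (Pobj M I p E \<Phi>))") auto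
    have Pv: "Pobj M I p E \<Phi> \<le> v" if "\<Phi> \<in> \<P>" for \<Phi>
    proof -
      have "ereal (Pobj M I p E \<Phi>) \<le> ereal v" using SUP_upper[OF that] v by metis
      then show ?thesis by simp
    qed
    define L where "L = {\<Phi>. Pobj M I p E \<Phi> \<le> v}"
    have Lcl: "closed L" unfolding L_def by (rule closed_Collect_le[OF Pobj_cont continuous_on_const])
    have Lcv: "convex L"
    proof (rule convexI)
      fix x y :: "nat \<Rightarrow> op" and u w :: real
      assume "x \<in> L" "y \<in> L" "0 \<le> u" "0 \<le> w" "u + w = 1"
      then have "u * Pobj M I p E x + w * Pobj M I p E y \<le> u * v + w * v"
        unfolding L_def by (intro add_mono mult_left_mono) auto
      also have "\<dots> = (u + w) * v" by (simp add: algebra_simps)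
      also have "\<dots> = v" using \<open>u + w = 1\<close> by simp
      finally show "u *\<^sub>R x + w *\<^sub>R y \<in> L" by (simp add: L_def Pobj_lin)
    qed
    have FL: "F \<subseteq> L"
    proof -
      have "\<P> \<subseteq> L" using Pv by (auto simp: L_def)
      then have "convex hull \<P> \<subseteq> L" using Lcv by (rule hull_minimal)
      then have "closure (convex hull \<P>) \<subseteq> L" using Lcl by (rule closure_minimal)
      then show ?thesis using clo by simp
    qed
    have "(INF X\<in>DC M I p E \<C>. ereal (DS I \<S> X)) \<le> ereal v + ereal e" if e0: "0 < e" for e
    proof -
      have \<Phi>0F: "\<Phi>0 \<in> \<C>" "(\<Sum>m=1..M. \<Phi>0 m) \<in> \<S>" using PF \<Phi>0P by (auto simp: F_def)
      have lt: "Pobj M I p E \<Phi> < v + e" if "\<Phi> \<in> \<C>" "(\<Sum>m=1..M. \<Phi> m) \<in> \<S>" for \<Phi>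
      proof -
        have "\<Phi> \<in> L" using FL that by (auto simp: F_def)
        then show ?thesis using e0 by (simp add: L_def)
      qed
      have Plin: "\<And>a b \<Phi> \<Psi>. Pobj M I p E (a *\<^sub>R \<Phi> + b *\<^sub>R \<Psi>) = a * Pobj M I p E \<Phi> + b * Pobj M I p E \<Psi>"
        by (rule Pobj_lin)
      have Pc: "continuous_on UNIV (Pobj M I p E)" by (rule Pobj_cont)
      have ex: "\<exists>chi. Her I chi \<and> (\<forall>\<Phi>\<in>\<C>. Pobj M I p E \<Phi> \<le> inner_op I (\<Sum>m=1..M. \<Phi> m) chi) \<and>
             (\<forall>\<phi>\<in>\<S>. inner_op I \<phi> chi \<le> v + e)"
        by (rule core[where I = I and M = M and C = \<C> and S = \<S> and Pf = "Pobj M I p E" and z = "v + e"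
            and BS = BS, OF finI assms(9,10,11) _ _ assms(13,14) Spos Sb Pc Plin \<Phi>0F lt])
          (metis Cpos, metis Cz)
      then obtain chi where Hchi: "Her I chi" and c1: "\<forall>\<Phi>\<in>\<C>. Pobj M I p E \<Phi> \<le> inner_op I (\<Sum>m=1..M. \<Phi> m) chi"
        and c2: "\<forall>\<phi>\<in>\<S>. inner_op I \<phi> chi \<le> v + e" by blast
      have chiDC: "chi \<in> DC M I p E \<C>"
        unfolding DC_def DC_sum using Hchi c1 by simp
      have "DS I \<S> chi \<le> v + e"
        unfolding DS_def by (rule cSup_least) (use Sne c2 in auto)
      then have "(INF X\<in>DC M I p E \<C>. ereal (DS I \<S> X)) \<le> ereal (v + e)"
        using INF_lower[OF chiDC, of "\<lambda>X. ereal (DS I \<S> X)"] by (metis ereal_less_eq(3) order_trans)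
      then show ?thesis by simp
    qed
    then have "(INF X\<in>DC M I p E \<C>. ereal (DS I \<S> X)) \<le> ereal v" by (rule ereal_le_epsilon2)
    then show ?thesis using v by simp
  qed
  show ?thesis using le1 le2 unfolding I_def by (rule antisym)
qed
end
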